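(* For every $n\ge 3$ there exist distributions $G_1,\dots,G_n$ satisfying the standing assumptions for which no ordinal SCF solves program (OPT); that is, for these distributions there is an anonymous BIC SCF $f$ with $W(f)>W(g)$ for every ordinal, anonymous, BIC SCF $g$.
   Context: There are $n\ge 2$ agents $N=\{1,\dots,n\}$ choosing between a Reform $R$ and the Status quo $S$. Agent $i$ gets utility $0$ if $S$ is chosen and utility $v_i\in\mathbb{R}$ if $R$ is chosen. Values are independent random variables $\tilde v_1,\dots,\tilde v_n$, $\tilde v_i\sim G_i$ (Borel probability distributions on $\mathbb{R}$, $G_i(0)=\Pr(\tilde v_i\le 0)$). Standing assumptions: all $\tilde v_i$ have the same support $V$ with $0\notin V$; $\mathbb{E}|\tilde v_i|<\infty$; $p_i:=1-G_i(0)\in(0,1)$. An SCF is a Borel measurable $f:V^n\to[0,1]$ (probability of choosing $R$). $f$ is anonymous if $f(v)=f(\pi v)$ for every $v\in V^n$ and every permutation $\pi$ of $N$, where $\pi v=(v_{\pi(1)},\dots,v_{\pi(n)})$. $f$ is BIC if for every $i$ and all $v_i,v_i'\in V$: $v_i\,\mathbb{E}(f(v_i,\tilde v_{-i}))\ge v_i\,\mathbb{E}(f(v_i',\tilde v_{-i}))$ (expectation over $\tilde v_{-i}=(\tilde v_j)_{j\neq i}$). Expected welfare is $W(f)=\mathbb{E}\big(f(\tilde v)\sum_{i=1}^n\tilde v_i\big)$. Program (OPT): maximize $W(f)$ subject to $f$ being anonymous and BIC. For $v\in V^n$ let $\chi(v)=\{i\in N: v_i>0\}$. $f$ is ordinal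 if $f(v)=f(v')$ whenever $\chi(v)=\chi(v')$. *)

theory Defs
  imports "HOL-Probability.Probability"
begin

text \<open>Agents are indexed by 0..<n; a profile is an (extensional) function nat => real,
  i.e. an element of PiE {..<n} (\<lambda>_. V).\<close>

definition support_of :: "real measure \<Rightarrow> real set" where
  "support_of M = {x. \<forall>e>0. measure M (ball x e) > 0}"

definition standing_assms :: "nat \<Rightarrow> (nat \<Rightarrow> real measure) \<Rightarrow> real set \<Rightarrow> bool" where
  "standing_assms n G V \<longleftrightarrow>
     (\<forall>i<n. prob_space (G i) \<and> sets (G i) = sets borel \<and>
            support_of (G i) = V \<and>
            integrable (G i) (\<lambda>x. x) \<and>
            0 < 1 - measure (G i) {..0} \<and> 1 - measure (G i) {..0} < 1) \<and>
     0 \<notin> V"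

definition SCF :: "nat \<Rightarrow> real set \<Rightarrow> ((nat \<Rightarrow> real) \<Rightarrow> real) \<Rightarrow> bool" where
  "SCF n V f \<longleftrightarrow>
     f \<in> borel_measurable (PiM {..<n} (\<lambda>_. borel)) \<and>
     (\<forall>v \<in> PiE {..<n} (\<lambda>_. V). 0 \<le> f v \<and> f v \<le> 1)"

definition anonymous :: "nat \<Rightarrow> real set \<Rightarrow> ((nat \<Rightarrow> real) \<Rightarrow> real) \<Rightarrow> bool" where
  "anonymous n V f \<longleftrightarrow>
     (\<forall>v \<in> PiE {..<n} (\<lambda>_. V). \<forall>\<pi>. \<pi> permutes {..<n} \<longrightarrow> f v = f (v \<circ> \<pi>))"

definition interim :: "nat \<Rightarrow> (nat \<Rightarrow> real measure) \<Rightarrow> ((nat \<Rightarrow> real) \<Rightarrow> real) \<Rightarrow> nat \<Rightarrow> real \<Rightarrow> real" where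
  "interim n G f i x = (\<integral>w. f (w(i := x)) \<partial>(PiM ({..<n} - {i}) G))"

definition BIC :: "nat \<Rightarrow> (nat \<Rightarrow> real measure) \<Rightarrow> real set \<Rightarrow> ((nat \<Rightarrow> real) \<Rightarrow> real) \<Rightarrow> bool" where
  "BIC n G V f \<longleftrightarrow>
     (\<forall>i<n. \<forall>x\<in>V. \<forall>x'\<in>V. x * interim n G f i x \<ge> x * interim n G f i x')"

definition welfare :: "nat \<Rightarrow> (nat \<Rightarrow> real measure) \<Rightarrow> ((nat \<Rightarrow> real) \<Rightarrow> real) \<Rightarrow> real" where
  "welfare n G f = (\<integral>v. f v * (\<Sum>i<n. v i) \<partial>(PiM {..<n} G))"

definition chi :: "nat \<Rightarrow> (nat \<Rightarrow> real) \<Rightarrow> nat set" where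
  "chi n v = {i. i < n \<and> v i > 0}"

definition ordinal :: "nat \<Rightarrow> real set \<Rightarrow> ((nat \<Rightarrow> real) \<Rightarrow> real) \<Rightarrow> bool" where
  "ordinal n V f \<longleftrightarrow>
     (\<forall>v \<in> PiE {..<n} (\<lambda>_. V). \<forall>v' \<in> PiE {..<n} (\<lambda>_. V). chi n v = chi n v' \<longrightarrow> f v = f v')"

end

theory Submission
  imports Defs
begin

locale cex =
  fixes n :: nat
  assumes n3: "3 \<le> n"
begin

definition u :: real where "u = 1 / (real n - 1)"
definition A :: real where "A = 2 * real n - 5/2"
definition V :: "real set" where "V = {A, -1, -2}"
definition pL :: real where "pL = u / 3"
definition rL :: real where "rL = u / 100"
definition gL :: real where "gL = 1 - pL - rL"
definition qL :: real where "qL = 1 - pL"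
definition cH :: real where "cH = u / 100"
definition aH :: real where "aH = (1 - u/100 + 197 * u^2 / (30000 * gL)) / 3"
definition bH :: real where "bH = 2 * aH - 197 * u^2 / (30000 * gL)"
definition phi :: real where "phi = 1 - 203 * (1 - u) / (300 * gL)"
definition kap :: real where "kap = 2 * (1 - u) / (9 * gL^2)"

lemma u_pos: "0 < u" and u_le: "u \<le> 1/2"
proof -
  have "real n \<ge> 3" using n3 by simp
  then show "0 < u" "u \<le> 1/2" by (auto simp: u_def field_simps)
qed

lemma gL_eq: "gL = 1 - 103 * u / 300" by (simp add: gL_def pL_def rL_def)
lemma gL_pos: "0 < gL" and gL_ge: "gL \<ge> 497/600" and gL_le: "gL < 1"
  using u_pos u_le by (auto simp: gL_eq)
lemma pL_pos: "0 < pL" and rL_pos: "0 < rL" and cH_pos: "0 < cH"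
  using u_pos by (auto simp: pL_def rL_def cH_def)
lemma qL_eq: "qL = rL + gL" by (simp add: qL_def gL_def)
lemma qL_pos: "0 < qL" using gL_pos rL_pos qL_eq by simp

lemma aH_pos: "0 < aH"
proof -
  have "0 \<le> 197 * u^2 / (30000 * gL)" using gL_pos by simp
  then show ?thesis using u_le by (simp add: aH_def)
qed

lemma bH_pos: "0 < bH"
proof -
  have a: "aH \<ge> (1 - u/100) / 3" using gL_pos by (simp add: aH_def)
  have "197 * u^2 / (30000 * gL) \<le> 197 * (1/4) / (30000 * (497/600))"
  proof (rule frac_le)
    have "u^2 \<le> (1/2)^2" using u_pos u_le by (intro power_mono) auto
    then show "197 * u^2 \<le> 197 * (1/4)" by (simp add: power2_eq_square)
  qed (use gL_pos gL_ge in auto)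
  then show ?thesis using a u_le by (simp add: bH_def)
qed

lemma sumH: "aH + bH + cH = 1" by (simp add: aH_def bH_def cH_def field_simps)
lemma sumL: "pL + rL + gL = 1" by (simp add: gL_def)

lemma A_ge: "A \<ge> 7/2" using n3 by (simp add: A_def)

definition wt :: "nat \<Rightarrow> real \<Rightarrow> real" where
  "wt i x = (if i = 0 then (if x = A then aH else if x = -1 then bH else if x = -2 then cH else 0)
              else (if x = A then pL else if x = -1 then rL else if x = -2 then gL else 0))"

lemma wt_A: "wt i A = (if i = 0 then aH else pL)" using A_ge by (simp add: wt_def)
lemma wt_m1: "wt i (-1) = (if i = 0 then bH else rL)" using A_ge by (simp add: wt_def)
lemma wt_m2: "wt i (-2) = (if i = 0 then cH else gL)" using A_ge by (simp add: wt_def)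
lemma wt_pos: "x \<in> V \<Longrightarrow> 0 < wt i x"
  using aH_pos bH_pos cH_pos pL_pos rL_pos gL_pos by (auto simp: V_def wt_A wt_m1 wt_m2)
lemma wt_sum: "wt i A + wt i (-1) + wt i (-2) = 1"
  using sumH sumL by (simp add: wt_A wt_m1 wt_m2)


definition Pm :: "nat \<Rightarrow> real pmf" where
  "Pm i = pmf_of_list [(A, wt i A), (-1, wt i (-1)), (-2, wt i (-2))]"

lemma Pm_wf: "pmf_of_list_wf [(A, wt i A), (-1, wt i (-1)), (-2, wt i (-2))]"
proof (rule pmf_of_list_wfI)
  show "sum_list (map snd [(A, wt i A), (-1, wt i (-1)), (-2, wt i (-2))]) = 1"
    using wt_sum[of i] by (simp add: add.assoc)
  fix x assume "x \<in> set (map snd [(A, wt i A), (- 1, wt i (- 1)), (- 2, wt i (- 2))])"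
  then show "0 \<le> x" using wt_pos[of A i] wt_pos[of "-1" i] wt_pos[of "-2" i] by (auto simp: V_def)
qed

definition G :: "nat \<Rightarrow> real measure" where
  "G i = distr (measure_pmf (Pm i)) borel (\<lambda>x. x)"

lemma sets_G[simp]: "sets (G i) = sets borel" by (simp add: G_def)
lemma space_G[simp]: "space (G i) = UNIV" by (simp add: G_def)

lemma prob_G: "prob_space (G i)"
  unfolding G_def by (rule prob_space.prob_space_distr) (auto simp: measure_pmf.prob_space_axioms)

definition mass :: "nat \<Rightarrow> real set \<Rightarrow> real" where
  "mass i B = (if A \<in> B then wt i A else 0) + (if -1 \<in> B then wt i (-1) else 0)
              + (if -2 \<in> B then wt i (-2) else 0)"

lemma mass_nonneg: "0 \<le> mass i B"
  using wt_pos[of A i] wt_pos[of "-1" i] wt_pos[of "-2" i] by (simp add: mass_def V_def)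

lemma emeasure_G: "B \<in> sets borel \<Longrightarrow> emeasure (G i) B = ennreal (mass i B)"
proof -
  assume B: "B \<in> sets borel"
  have "emeasure (G i) B = emeasure (measure_pmf (Pm i)) B"
    unfolding G_def using B by (subst emeasure_distr) auto
  also have "\<dots> = ennreal (sum_list (map snd (filter (\<lambda>x. fst x \<in> B)
                      [(A, wt i A), (-1, wt i (-1)), (-2, wt i (-2))])))"
    unfolding Pm_def by (rule emeasure_pmf_of_list[OF Pm_wf])
  also have "sum_list (map snd (filter (\<lambda>x. fst x \<in> B)
                      [(A, wt i A), (-1, wt i (-1)), (-2, wt i (-2))])) = mass i B"
    by (simp add: mass_def)
  finally show ?thesis .
qed

lemma measure_G: "B \<in> sets borel \<Longrightarrow> measure (G i) B = mass i B"
  using emeasure_G[of B i] mass_nonneg[of i B] by (simp add: measure_def)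

lemma A_neq: "A \<noteq> -1" "A \<noteq> -2" "A > 0" using A_ge by auto

lemma support_G: "support_of (G i) = V"
proof (intro set_eqI iffI)
  fix x assume "x \<in> support_of (G i)"
  then have pos: "\<And>e. e > 0 \<Longrightarrow> measure (G i) (ball x e) > 0" by (simp add: support_of_def)
  show "x \<in> V"
  proof (rule ccontr)
    assume nx: "x \<notin> V"
    define e where "e = min (dist x A) (min (dist x (-1)) (dist x (-2)))"
    have "e > 0" using nx by (auto simp: e_def V_def)
    have "A \<notin> ball x e" "-1 \<notin> ball x e" "-2 \<notin> ball x e" by (auto simp: e_def)
    then have "mass i (ball x e) = 0" by (simp add: mass_def)
    with pos[OF \<open>e > 0\<close>] show False by (simp add: measure_G)
  qed
next
  fix x assume x: "x \<in> V"
  show "x \<in> support_of (G i)"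
    unfolding support_of_def
  proof (intro CollectI allI impI)
    fix e :: real assume "e > 0"
    then have xin: "x \<in> ball x e" by simp
    have "wt i x \<le> mass i (ball x e)"
      using x xin wt_pos[of A i] wt_pos[of "-1" i] wt_pos[of "-2" i] A_neq
      by (auto simp: mass_def V_def)
    then show "measure (G i) (ball x e) > 0" using wt_pos[OF x, of i] by (simp add: measure_G)
  qed
qed

lemma integrable_G: "integrable (G i) (\<lambda>x. x)"
proof -
  have 1: "integrable (measure_pmf (Pm i)) (\<lambda>x::real. x)"
  proof (rule integrable_measure_pmf_finite)
    show "finite (set_pmf (Pm i))" unfolding Pm_def by (rule finite_set_pmf_of_list[OF Pm_wf])
  qed
  have m: "(\<lambda>x::real. x) \<in> measurable (measure_pmf (Pm i)) borel" by simp
  have b: "(\<lambda>x::real. x) \<in> borel_measurable borel" by simp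
  have "integrable (distr (measure_pmf (Pm i)) borel (\<lambda>x. x)) (\<lambda>x. x) = integrable (measure_pmf (Pm i)) (\<lambda>x. x)"
    by (rule integrable_distr_eq[OF m b])
  then show ?thesis using 1 unfolding G_def by simp
qed

lemma measure_G_nonpos: "measure (G i) {..0} = wt i (-1) + wt i (-2)"
proof -
  have "A \<notin> {..0}" using A_neq by simp
  then show ?thesis by (simp add: measure_G mass_def)
qed

end

context cex begin

lemma PG: "product_prob_space G" by (rule product_prob_spaceI) (rule prob_G)

lemma mass_single: "x \<in> V \<Longrightarrow> mass j {x} = wt j x"
  using A_neq by (auto simp: mass_def V_def)

lemma mass_V: "mass j V = 1"
  using A_neq wt_sum[of j] by (simp add: mass_def V_def add.assoc)

lemma sets_PiM_G: "sets (PiM I G) = sets (PiM I (\<lambda>_. borel))"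
  by (rule sets_PiM_cong) auto

lemma box_emeasure:
  assumes I: "finite I" and B: "\<And>j. j \<in> I \<Longrightarrow> B j \<in> sets borel"
  shows "emeasure (PiM I G) (PiE I B) = (\<Prod>j\<in>I. ennreal (mass j (B j)))"
proof -
  interpret product_prob_space G by (rule PG)
  have "emeasure (PiM I G) (PiE I B) = (\<Prod>j\<in>I. emeasure (G j) (B j))"
    using I B by (intro emeasure_PiM) auto
  also have "\<dots> = (\<Prod>j\<in>I. ennreal (mass j (B j)))"
    using B by (intro prod.cong refl emeasure_G) auto
  finally show ?thesis .
qed

lemma box_measure:
  assumes I: "finite I" and B: "\<And>j. j \<in> I \<Longrightarrow> B j \<in> sets borel"
  shows "measure (PiM I G) (PiE I B) = (\<Prod>j\<in>I. mass j (B j))"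
proof -
  have "measure (PiM I G) (PiE I B) = enn2real (\<Prod>j\<in>I. ennreal (mass j (B j)))"
    using box_emeasure[OF I B] by (simp add: measure_def)
  also have "\<dots> = (\<Prod>j\<in>I. mass j (B j))"
    by (subst prod_ennreal) (auto simp: mass_nonneg prod_nonneg)
  finally show ?thesis .
qed

lemma AE_V:
  assumes I: "finite I"
  shows "AE v in PiM I G. v \<in> PiE I (\<lambda>_. V)"
proof -
  interpret P: prob_space "PiM I G" by (rule prob_space_PiM) (rule prob_G)
  have "P.prob (PiE I (\<lambda>_. V)) = (\<Prod>j\<in>I. mass j V)"
    by (rule box_measure[OF I]) (simp add: V_def)
  also have "\<dots> = 1" by (simp add: mass_V)
  finally show ?thesis by (rule P.AE_prob_1)
qed

definition Ex :: "nat set \<Rightarrow> ((nat \<Rightarrow> real) \<Rightarrow> real) \<Rightarrow> real" where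
  "Ex I F = (\<Sum>t\<in>PiE I (\<lambda>_. V). F t * (\<Prod>j\<in>I. wt j (t j)))"

lemma finite_V: "finite V" by (simp add: V_def)

lemma int_formula:
  assumes I: "finite I" and F: "F \<in> borel_measurable (PiM I (\<lambda>_. borel))"
  shows "integral\<^sup>L (PiM I G) F = Ex I F"
proof -
  have FG: "F \<in> borel_measurable (PiM I G)"
    using F measurable_cong_sets[OF sets_PiM_G refl] by blast
  define H where "H v = (\<Sum>t\<in>PiE I (\<lambda>_. V). F t * indicator (PiE I (\<lambda>j. {t j})) v)" for v
  have box_sets: "PiE I (\<lambda>j. {t j}) \<in> sets (PiM I G)" for t
    using I by (intro sets_PiM_I_finite) auto
  have HG: "H \<in> borel_measurable (PiM I G)"
    unfolding H_def using box_sets by (intro borel_measurable_sum borel_measurable_times) auto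
  have eq: "F v = H v" if v: "v \<in> PiE I (\<lambda>_. V)" for v
  proof -
    have ind: "indicator (PiE I (\<lambda>j. {t j})) v = (if t = v then 1 else (0::real))"
      if t: "t \<in> PiE I (\<lambda>_. V)" for t
    proof -
      have "v \<in> PiE I (\<lambda>j. {t j}) \<longleftrightarrow> t = v"
        using v t by (auto simp: PiE_iff extensional_def fun_eq_iff) metis
      then show ?thesis by (simp add: indicator_def)
    qed
    have "H v = (\<Sum>t\<in>PiE I (\<lambda>_. V). F t * (if t = v then 1 else 0))"
      unfolding H_def by (intro sum.cong refl) (simp add: ind)
    also have "\<dots> = (\<Sum>t\<in>PiE I (\<lambda>_. V). if t = v then F v else 0)"
      by (intro sum.cong) auto
    also have "\<dots> = F v" using v I finite_V by (subst sum.delta) (auto intro: finite_PiE)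
    finally show ?thesis by simp
  qed
  have "integral\<^sup>L (PiM I G) F = integral\<^sup>L (PiM I G) H"
    by (rule integral_cong_AE[OF FG HG]) (use AE_V[OF I] eq in \<open>auto elim: AE_mp\<close>)
  also have "\<dots> = (\<Sum>t\<in>PiE I (\<lambda>_. V). F t * measure (PiM I G) (PiE I (\<lambda>j. {t j})))"
  proof -
    interpret P: prob_space "PiM I G" by (rule prob_space_PiM) (rule prob_G)
    have sp: "PiE I (\<lambda>j. {t j}) \<inter> space (PiM I G) = PiE I (\<lambda>j. {t j})" for t
      using box_sets[of t] sets.sets_into_space by blast
    have "integral\<^sup>L (PiM I G) H = (\<Sum>t\<in>PiE I (\<lambda>_. V). integral\<^sup>L (PiM I G) (\<lambda>v. F t * indicator (PiE I (\<lambda>j. {t j})) v))"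
      unfolding H_def by (rule Bochner_Integration.integral_sum[where f="\<lambda>t v. F t * (indicator (PiE I (\<lambda>j. {t j})) v :: real)"]) (use box_sets in \<open>auto intro!: integrable_real_indicator simp: P.emeasure_eq_measure\<close>)
    also have "\<dots> = (\<Sum>t\<in>PiE I (\<lambda>_. V). F t * measure (PiM I G) (PiE I (\<lambda>j. {t j})))"
      by (intro sum.cong refl) (simp add: sp)
    finally show ?thesis .
  qed
  also have "\<dots> = Ex I F"
    unfolding Ex_def
  proof (intro sum.cong refl)
    fix t assume t: "t \<in> PiE I (\<lambda>_. V)"
    have "measure (PiM I G) (PiE I (\<lambda>j. {t j})) = (\<Prod>j\<in>I. mass j {t j})"
      by (rule box_measure[OF I]) auto
    also have "\<dots> = (\<Prod>j\<in>I. wt j (t j))"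
      using t by (intro prod.cong refl mass_single) (auto simp: PiE_iff)
    finally show "F t * measure (PiM I G) (PiE I (\<lambda>j. {t j})) = F t * (\<Prod>j\<in>I. wt j (t j))" by simp
  qed
  finally show ?thesis .
qed

end

context cex begin

lemma sum_V: "(\<Sum>y\<in>V. h y) = h A + h (-1) + h (-2)"
  using A_neq by (simp add: V_def add.assoc)

lemma Ex_peel:
  assumes I: "finite I" and j: "j \<notin> I"
  shows "Ex (insert j I) F = (\<Sum>y\<in>V. wt j y * Ex I (\<lambda>t. F (t(j:=y))))"
proof -
  let ?f = "\<lambda>(y, g). g(j := y)"
  have inj: "inj_on ?f (V \<times> PiE I (\<lambda>_. V))"
  proof (rule inj_onI, clarify)
    fix y g y' g' assume g: "g \<in> PiE I (\<lambda>_. V)" and g': "g' \<in> PiE I (\<lambda>_. V)"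
      and eq: "g(j := y) = g'(j := y')"
    from eq have "y = y'" by (metis fun_upd_same)
    moreover have "g = g'"
    proof
      fix x show "g x = g' x"
      proof (cases "x = j")
        case True then show ?thesis using g g' j by (auto simp: PiE_iff extensional_def)
      next
        case False then show ?thesis using eq by (metis fun_upd_other)
      qed
    qed
    ultimately show "y = y' \<and> g = g'" by simp
  qed
  have "Ex (insert j I) F = (\<Sum>t\<in>?f ` (V \<times> PiE I (\<lambda>_. V)). F t * (\<Prod>k\<in>insert j I. wt k (t k)))"
    unfolding Ex_def by (simp add: PiE_insert_eq)
  also have "\<dots> = (\<Sum>p\<in>V \<times> PiE I (\<lambda>_. V). F (?f p) * (\<Prod>k\<in>insert j I. wt k (?f p k)))"
    by (rule sum.reindex_cong[OF inj refl]) simp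
  also have "\<dots> = (\<Sum>y\<in>V. \<Sum>g\<in>PiE I (\<lambda>_. V). F (g(j:=y)) * (\<Prod>k\<in>insert j I. wt k ((g(j:=y)) k)))"
    by (subst sum.cartesian_product) (auto intro!: sum.cong)
  also have "\<dots> = (\<Sum>y\<in>V. wt j y * Ex I (\<lambda>t. F (t(j:=y))))"
    unfolding Ex_def
  proof (intro sum.cong refl)
    fix y
    have "(\<Prod>k\<in>insert j I. wt k ((g(j:=y)) k)) = wt j y * (\<Prod>k\<in>I. wt k (g k))" for g
    proof -
      have "(\<Prod>k\<in>insert j I. wt k ((g(j:=y)) k)) = wt j y * (\<Prod>k\<in>I. wt k ((g(j:=y)) k))"
        using I j by (simp add: prod.insert)
      also have "(\<Prod>k\<in>I. wt k ((g(j:=y)) k)) = (\<Prod>k\<in>I. wt k (g k))"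
        using j by (intro prod.cong refl) auto
      finally show ?thesis .
    qed
    then show "(\<Sum>g\<in>PiE I (\<lambda>_. V). F (g(j:=y)) * (\<Prod>k\<in>insert j I. wt k ((g(j:=y)) k))) =
          wt j y * (\<Sum>t\<in>PiE I (\<lambda>_. V). F (t(j:=y)) * (\<Prod>k\<in>I. wt k (t k)))"
      by (simp add: sum_distrib_left mult_ac)
  qed
  finally show ?thesis .
qed

lemma Ex_empty: "Ex {} F = F (\<lambda>_. undefined)"
  by (simp add: Ex_def)

lemma weight_nonneg: "t \<in> PiE I (\<lambda>_. V) \<Longrightarrow> 0 \<le> (\<Prod>j\<in>I. wt j (t j))"
  by (intro prod_nonneg) (auto simp: PiE_iff intro: less_imp_le wt_pos)

lemma Ex_mono:
  assumes "\<And>t. t \<in> PiE I (\<lambda>_. V) \<Longrightarrow> F t \<le> H t"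
  shows "Ex I F \<le> Ex I H"
  unfolding Ex_def using assms weight_nonneg by (intro sum_mono mult_right_mono) auto

lemma Ex_cong:
  assumes "\<And>t. t \<in> PiE I (\<lambda>_. V) \<Longrightarrow> F t = H t"
  shows "Ex I F = Ex I H"
  unfolding Ex_def using assms by (intro sum.cong refl) auto

lemma Ex_add: "Ex I (\<lambda>t. F t + H t) = Ex I F + Ex I H"
  unfolding Ex_def by (simp add: distrib_right sum.distrib)
lemma Ex_diff: "Ex I (\<lambda>t. F t - H t) = Ex I F - Ex I H"
  unfolding Ex_def by (simp add: left_diff_distrib sum_subtractf)
lemma Ex_cmult: "Ex I (\<lambda>t. k * F t) = k * Ex I F"
  unfolding Ex_def by (simp add: sum_distrib_left mult_ac)

definition cnt :: "nat set \<Rightarrow> (real \<Rightarrow> bool) \<Rightarrow> (nat \<Rightarrow> real) \<Rightarrow> nat" where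
  "cnt I P t = card {j\<in>I. P (t j)}"

lemma cnt_upd:
  assumes I: "finite I" and j: "j \<notin> I"
  shows "cnt (insert j I) P (t(j:=y)) = (if P y then 1 else 0) + cnt I P t"
proof -
  have eq: "{k\<in>insert j I. P ((t(j:=y)) k)} = (if P y then {j} else {}) \<union> {k\<in>I. P (t k)}"
    using j by auto
  have "card ((if P y then {j} else {}) \<union> {k\<in>I. P (t k)}) = card (if P y then {j} else {}) + card {k\<in>I. P (t k)}"
    using I j by (intro card_Un_disjoint) auto
  then show ?thesis unfolding cnt_def eq by simp
qed

lemma cnt_upd_out: "j \<notin> I \<Longrightarrow> cnt I P (t(j:=y)) = cnt I P t"
  unfolding cnt_def by (rule arg_cong[where f=card]) auto

definition CE :: "nat set \<Rightarrow> (nat \<Rightarrow> nat \<Rightarrow> real) \<Rightarrow> real" where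
  "CE I F = Ex I (\<lambda>t. F (cnt I (\<lambda>y. 0 < y) t) (cnt I (\<lambda>y. y = -1) t))"

lemma CE_peel:
  assumes I: "finite I" and j: "j \<notin> I"
  shows "CE (insert j I) F = wt j A * CE I (\<lambda>c d. F (Suc c) d) + wt j (-1) * CE I (\<lambda>c d. F c (Suc d))
           + wt j (-2) * CE I F"
  unfolding CE_def
  by (simp add: Ex_peel[OF I j] sum_V cnt_upd[OF I j] A_neq)

lemma CE_empty: "CE {} F = F 0 0"
  by (simp add: CE_def Ex_empty cnt_def)

lemma CE_add: "CE I (\<lambda>c d. F c d + H c d) = CE I F + CE I H"
  unfolding CE_def by (rule Ex_add)
lemma CE_cmult: "CE I (\<lambda>c d. k * F c d) = k * CE I F"
  unfolding CE_def by (rule Ex_cmult)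
lemma CE_zero[simp]: "CE I (\<lambda>c d. 0) = 0"
  using CE_cmult[of I 0 "\<lambda>c d. 0"] by simp
lemma CE_mono: "(\<And>c d. F c d \<le> H c d) \<Longrightarrow> CE I F \<le> CE I H"
  unfolding CE_def by (rule Ex_mono) auto

end

context cex begin

definition Zf :: "nat \<Rightarrow> nat \<Rightarrow> real" where "Zf c d = (if c = 0 \<and> d = 0 then 1 else 0)"
definition Xf :: "nat \<Rightarrow> nat \<Rightarrow> real" where "Xf c d = (if c = 1 \<and> d = 0 then 1 else 0)"
definition Qf :: "nat \<Rightarrow> nat \<Rightarrow> real" where "Qf c d = (if c = 0 \<and> d = 1 then 1 else 0)"
definition Yf :: "nat \<Rightarrow> nat \<Rightarrow> real" where "Yf c d = (if c = 1 \<and> d = 1 then 1 else 0)"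
definition E0 :: "nat \<Rightarrow> nat \<Rightarrow> real" where "E0 c d = (if c = 0 then 1 else 0)"
definition E0d :: "nat \<Rightarrow> nat \<Rightarrow> real" where "E0d c d = (if c = 0 then real d else 0)"
definition E1 :: "nat \<Rightarrow> nat \<Rightarrow> real" where "E1 c d = (if c = 1 then 1 else 0)"
definition E1d :: "nat \<Rightarrow> nat \<Rightarrow> real" where "E1d c d = (if c = 1 then real d else 0)"

lemma shifts[simp]:
  "Zf (Suc c) d = 0" "Zf c (Suc d) = 0"
  "Xf (Suc c) d = Zf c d" "Xf c (Suc d) = 0"
  "Qf (Suc c) d = 0" "Qf c (Suc d) = Zf c d"
  "Yf (Suc c) d = Qf c d" "Yf c (Suc d) = Xf c d"
  "E0 (Suc c) d = 0" "E0 c (Suc d) = E0 c d"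
  "E0d (Suc c) d = 0" "E0d c (Suc d) = E0d c d + E0 c d"
  "E1 (Suc c) d = E0 c d" "E1 c (Suc d) = E1 c d"
  "E1d (Suc c) d = E0d c d" "E1d c (Suc d) = E1d c d + E1 c d"
  by (auto simp: Zf_def Xf_def Qf_def Yf_def E0_def E0d_def E1_def E1d_def)

lemma wtL: "j \<noteq> 0 \<Longrightarrow> wt j A = pL \<and> wt j (-1) = rL \<and> wt j (-2) = gL"
  by (simp add: wt_A wt_m1 wt_m2)

lemma hom_g:
  assumes "finite J" "0 \<notin> J"
  shows "CE J Zf = gL ^ card J \<and> gL * CE J Xf = real (card J) * pL * gL ^ card J
       \<and> gL * CE J Qf = real (card J) * rL * gL ^ card J
       \<and> gL^2 * CE J Yf = real (card J) * (real (card J) - 1) * pL * rL * gL ^ card J"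
  using assms
proof (induction J rule: finite_induct)
  case empty
  then show ?case by (simp add: CE_empty Zf_def Xf_def Qf_def Yf_def)
next
  case (insert j J)
  then have j0: "j \<noteq> 0" and J0: "0 \<notin> J" by auto
  note IH = insert.IH[OF J0]
  note w = wtL[OF j0]
  have Z: "CE (insert j J) Zf = gL * CE J Zf"
    using CE_peel[OF insert.hyps(1,2), of Zf] w by simp
  have X: "CE (insert j J) Xf = pL * CE J Zf + gL * CE J Xf"
    using CE_peel[OF insert.hyps(1,2), of Xf] w by simp
  have Q: "CE (insert j J) Qf = rL * CE J Zf + gL * CE J Qf"
    using CE_peel[OF insert.hyps(1,2), of Qf] w by simp
  have Y: "CE (insert j J) Yf = pL * CE J Qf + rL * CE J Xf + gL * CE J Yf"
    using CE_peel[OF insert.hyps(1,2), of Yf] w by simp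
  have c: "card (insert j J) = Suc (card J)" using insert.hyps by simp
  show ?case
  proof (intro conjI)
    show "CE (insert j J) Zf = gL ^ card (insert j J)" using Z IH c by simp
    show "gL * CE (insert j J) Xf = real (card (insert j J)) * pL * gL ^ card (insert j J)"
      using X IH c by (simp add: algebra_simps)
    show "gL * CE (insert j J) Qf = real (card (insert j J)) * rL * gL ^ card (insert j J)"
      using Q IH c by (simp add: algebra_simps)
    have "gL^2 * CE (insert j J) Yf = pL * gL * (gL * CE J Qf) + rL * gL * (gL * CE J Xf) + gL * (gL^2 * CE J Yf)"
      using Y by (simp add: algebra_simps power2_eq_square)
    also have "\<dots> = pL * gL * (real (card J) * rL * gL ^ card J) + rL * gL * (real (card J) * pL * gL ^ card J)
        + gL * (real (card J) * (real (card J) - 1) * pL * rL * gL ^ card J)"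
      using IH by (simp only:)
    also have "\<dots> = real (card (insert j J)) * (real (card (insert j J)) - 1) * pL * rL * gL ^ card (insert j J)"
      using c by (simp add: algebra_simps)
    finally show "gL^2 * CE (insert j J) Yf = real (card (insert j J)) * (real (card (insert j J)) - 1) * pL * rL * gL ^ card (insert j J)" .
  qed
qed

lemma hom_q:
  assumes "finite J" "0 \<notin> J"
  shows "CE J E0 = qL ^ card J \<and> qL * CE J E0d = real (card J) * rL * qL ^ card J
       \<and> qL * CE J E1 = real (card J) * pL * qL ^ card J
       \<and> qL^2 * CE J E1d = real (card J) * (real (card J) - 1) * pL * rL * qL ^ card J"
  using assms
proof (induction J rule: finite_induct)
  case empty
  then show ?case by (simp add: CE_empty E0_def E0d_def E1_def E1d_def)
next
  case (insert j J)
  then have j0: "j \<noteq> 0" and J0: "0 \<notin> J" by auto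
  note IH = insert.IH[OF J0]
  note w = wtL[OF j0]
  have a: "CE (insert j J) E0 = qL * CE J E0"
    using CE_peel[OF insert.hyps(1,2), of E0] w qL_eq by (simp add: algebra_simps)
  have b: "CE (insert j J) E0d = qL * CE J E0d + rL * CE J E0"
    using CE_peel[OF insert.hyps(1,2), of E0d] w qL_eq by (simp add: CE_add algebra_simps)
  have d: "CE (insert j J) E1 = pL * CE J E0 + qL * CE J E1"
    using CE_peel[OF insert.hyps(1,2), of E1] w qL_eq by (simp add: algebra_simps)
  have e: "CE (insert j J) E1d = pL * CE J E0d + qL * CE J E1d + rL * CE J E1"
    using CE_peel[OF insert.hyps(1,2), of E1d] w qL_eq by (simp add: CE_add algebra_simps)
  have c: "card (insert j J) = Suc (card J)" using insert.hyps by simp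
  show ?case
  proof (intro conjI)
    show "CE (insert j J) E0 = qL ^ card (insert j J)" using a IH c by simp
    show "qL * CE (insert j J) E0d = real (card (insert j J)) * rL * qL ^ card (insert j J)"
      using b IH c by (simp add: algebra_simps)
    show "qL * CE (insert j J) E1 = real (card (insert j J)) * pL * qL ^ card (insert j J)"
      using d IH c by (simp add: algebra_simps)
    have "qL^2 * CE (insert j J) E1d = pL * qL * (qL * CE J E0d) + qL * (qL^2 * CE J E1d) + rL * qL * (qL * CE J E1)"
      using e by (simp add: algebra_simps power2_eq_square)
    also have "\<dots> = pL * qL * (real (card J) * rL * qL ^ card J) + qL * (real (card J) * (real (card J) - 1) * pL * rL * qL ^ card J)
        + rL * qL * (real (card J) * pL * qL ^ card J)"
      using IH by (simp only:)
    also have "\<dots> = real (card (insert j J)) * (real (card (insert j J)) - 1) * pL * rL * qL ^ card (insert j J)"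
      using c by (simp add: algebra_simps)
    finally show "qL^2 * CE (insert j J) E1d = real (card (insert j J)) * (real (card (insert j J)) - 1) * pL * rL * qL ^ card (insert j J)" .
  qed
qed

end

context cex begin

lemma n_real: "real n = 1 + 1/u"
  using n3 by (simp add: u_def field_simps)

definition J0 :: "nat set" where "J0 = {..<n} - {0}"
definition Jx :: "nat \<Rightarrow> nat set" where "Jx i = {..<n} - {0, i}"

lemma J0_props: "finite J0" "0 \<notin> J0" "card J0 = n - 1" "{..<n} = insert 0 J0"
  using n3 by (auto simp: J0_def)

lemma Jx_props: assumes "0 < i" "i < n"
  shows "finite (Jx i)" "0 \<notin> Jx i" "card (Jx i) = n - 2" "{..<n} - {i} = insert 0 (Jx i)"
  using assms n3 by (auto simp: Jx_def card_Diff_subset)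

lemma CE_diff: "CE I (\<lambda>c d. F c d - H c d) = CE I F - CE I H"
  unfolding CE_def by (rule Ex_diff)

lemma GG_pos: "0 < gL ^ k" using gL_pos by simp
lemma QQ_pos: "0 < qL ^ k" using qL_pos by simp

lemma BH_bracket: "(phi - 1) * (real n - 1) * pL * gL + (real n - 1) * (real n - 2) * pL * rL + kap * gL^2 = 0"
  using gL_pos u_pos unfolding n_real phi_def kap_def pL_def rL_def
  by (simp add: field_simps)

lemma gL_ne: "gL \<noteq> 0" using gL_pos by simp
lemma g300: "300 - 103 * u \<noteq> 0" using u_le by simp

lemma hA: "aH * gL = ((1 - u/100) * gL + 197 * u^2 / 30000) / 3"
  using gL_pos unfolding aH_def by (simp add: field_simps)
lemma hB: "bH * gL = ((2 - u/50) * gL - 197 * u^2 / 30000) / 3"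
  using gL_pos unfolding bH_def aH_def by (simp add: field_simps)
lemma hphi: "(phi - 1) * gL = - 203 * (1 - u) / 300"
  using gL_pos unfolding phi_def by (simp add: field_simps)
lemma hphi2: "phi * gL = gL - 203 * (1 - u) / 300"
  using gL_pos unfolding phi_def by (simp add: field_simps)
lemma hkap: "kap * gL^2 = 2 * (1 - u) / 9"
  using gL_pos unfolding kap_def by (simp add: field_simps)
lemma n1p: "(real n - 1) * pL = 1/3" using u_pos unfolding n_real pL_def by (simp add: field_simps)
lemma n1r: "(real n - 1) * rL = 1/100" using u_pos unfolding n_real rL_def by (simp add: field_simps)
lemma n2p: "(real n - 2) * pL = (1 - u)/3" using u_pos unfolding n_real pL_def by (simp add: field_simps)
lemma n2r: "(real n - 2) * rL = (1 - u)/100" using u_pos unfolding n_real rL_def by (simp add: field_simps)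
lemma n12: "(real n - 1) * (real n - 2) * pL * rL = (1 - u)/300"
  using u_pos unfolding n_real rL_def pL_def by (simp add: field_simps)
lemma n23: "(real n - 2) * (real n - 3) * pL * rL = (1 - u) * (1 - 2*u)/300"
  using u_pos unfolding n_real rL_def pL_def by (simp add: field_simps)
lemma nk: "cH * (2 * real n * kap * gL^2) = (1 - u^2)/225"
proof -
  have a: "cH * real n = (u + 1)/100" using u_pos unfolding n_real cH_def by (simp add: field_simps)
  have "cH * (2 * real n * kap * gL^2) = 2 * (cH * real n) * (kap * gL^2)" by (simp add: algebra_simps)
  also have "\<dots> = 2 * ((u + 1)/100) * (2 * (1 - u) / 9)" by (simp only: a hkap)
  also have "\<dots> = (1 - u^2)/225" by (simp add: field_simps power2_eq_square)
  finally show ?thesis .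
qed

lemma BL_bracket: "aH * ((phi - 1) * gL^2 + (real n - 2) * rL * gL) + bH * (real n - 2) * pL * gL
   + cH * ((phi - 1) * (real n - 2) * pL * gL + (real n - 2) * (real n - 3) * pL * rL + kap * gL^2) = 0"
proof -
  have "aH * ((phi - 1) * gL^2 + (real n - 2) * rL * gL) + bH * (real n - 2) * pL * gL
   + cH * ((phi - 1) * (real n - 2) * pL * gL + (real n - 2) * (real n - 3) * pL * rL + kap * gL^2)
   = (aH * gL) * ((phi - 1) * gL + (real n - 2) * rL) + (bH * gL) * ((real n - 2) * pL)
     + cH * (((phi - 1) * gL) * ((real n - 2) * pL) + (real n - 2) * (real n - 3) * pL * rL + kap * gL^2)"
    by (simp add: algebra_simps power2_eq_square)
  also have "\<dots> = (((1 - u/100) * gL + 197 * u^2 / 30000) / 3) * (- 203 * (1 - u) / 300 + (1 - u)/100)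
     + (((2 - u/50) * gL - 197 * u^2 / 30000) / 3) * ((1 - u)/3)
     + (u/100) * ((- 203 * (1 - u) / 300) * ((1 - u)/3) + (1 - u) * (1 - 2*u)/300 + 2 * (1 - u) / 9)"
    by (simp only: hA hB hphi n2r n2p n23 hkap cH_def)
  also have "\<dots> = 0" by (simp add: field_simps power2_eq_square)
  finally show ?thesis .
qed

lemma GAIN_poly: "aH * ((real n - 1) * rL * gL / 2 - phi * gL^2 / 2) + bH * (real n - 1) * pL * gL / 2
   + cH * ((real n - 1) * (real n - 2) * pL * rL / 2 - phi * (real n - 1) * pL * gL / 2 - 2 * real n * kap * gL^2)
   = 49/900 - 20759/270000 * u + 6209/270000 * u^2 - u^3/1800"
proof -
  have "aH * ((real n - 1) * rL * gL / 2 - phi * gL^2 / 2) + bH * (real n - 1) * pL * gL / 2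
   + cH * ((real n - 1) * (real n - 2) * pL * rL / 2 - phi * (real n - 1) * pL * gL / 2 - 2 * real n * kap * gL^2)
   = (aH * gL) * ((real n - 1) * rL / 2 - (phi * gL) / 2) + (bH * gL) * ((real n - 1) * pL) / 2
     + cH * ((real n - 1) * (real n - 2) * pL * rL / 2 - (phi * gL) * ((real n - 1) * pL) / 2)
     - cH * (2 * real n * kap * gL^2)"
    by (simp add: algebra_simps power2_eq_square)
  also have "\<dots> = (((1 - u/100) * gL + 197 * u^2 / 30000) / 3) * ((1/100) / 2 - (gL - 203 * (1 - u) / 300) / 2)
     + (((2 - u/50) * gL - 197 * u^2 / 30000) / 3) * (1/3) / 2
     + cH * ((1 - u)/300 / 2 - (gL - 203 * (1 - u) / 300) * (1/3) / 2) - (1 - u^2)/225"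
    by (simp only: hA hB hphi2 n1r n1p n12 nk)
  also have "\<dots> = 49/900 - 20759/270000 * u + 6209/270000 * u^2 - u^3/1800"
    unfolding gL_eq cH_def by (simp add: field_simps power2_eq_square power3_eq_cube)
  finally show ?thesis .
qed

lemma C1_poly: "gL * (aH * (real n - 1) * rL * qL + bH * ((real n - 1) * (real n - 2) * pL * rL + (real n - 1) * pL * qL)
   + cH * (real n - 1) * (real n - 2) * pL * rL - (1/2) * (aH * qL^2 + (bH + cH) * (real n - 1) * pL * qL))
   = -1/20 + 23429/270000 * u - 17839/405000 * u^2 + 6041/810000 * u^3 - u^4/5400"
proof -
  have "gL * (aH * (real n - 1) * rL * qL + bH * ((real n - 1) * (real n - 2) * pL * rL + (real n - 1) * pL * qL)
   + cH * (real n - 1) * (real n - 2) * pL * rL - (1/2) * (aH * qL^2 + (bH + cH) * (real n - 1) * pL * qL))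
   = (aH * gL) * ((real n - 1) * rL) * qL + (bH * gL) * ((real n - 1) * (real n - 2) * pL * rL + ((real n - 1) * pL) * qL)
     + cH * gL * ((real n - 1) * (real n - 2) * pL * rL) - (1/2) * ((aH * gL) * qL^2 + ((bH * gL) + cH * gL) * ((real n - 1) * pL) * qL)"
    by (simp add: algebra_simps power2_eq_square)
  also have "\<dots> = (((1 - u/100) * gL + 197 * u^2 / 30000) / 3) * (1/100) * qL
     + (((2 - u/50) * gL - 197 * u^2 / 30000) / 3) * ((1 - u)/300 + (1/3) * qL)
     + cH * gL * ((1 - u)/300)
     - (1/2) * ((((1 - u/100) * gL + 197 * u^2 / 30000) / 3) * qL^2 + ((((2 - u/50) * gL - 197 * u^2 / 30000) / 3) + cH * gL) * (1/3) * qL)"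
    by (simp only: hA hB n1r n1p n12)
  also have "\<dots> = -1/20 + 23429/270000 * u - 17839/405000 * u^2 + 6041/810000 * u^3 - u^4/5400"
    unfolding gL_eq qL_def pL_def cH_def by (simp add: field_simps power2_eq_square power3_eq_cube power4_eq_xxxx)
  finally show ?thesis .
qed

end

context cex begin

lemma u2_nonneg: "0 \<le> u^2" by simp
lemma u3_le: "u^3 \<le> u^2 / 2"
proof -
  have "u^3 = u * u^2" by (simp add: power3_eq_cube power2_eq_square)
  also have "\<dots> \<le> (1/2) * u^2" by (rule mult_right_mono[OF u_le]) simp
  finally show ?thesis by simp
qed
lemma u4_nonneg: "0 \<le> u^4" by simp

lemma GAIN_pos: "0 < 49/900 - 20759/270000 * u + 6209/270000 * u^2 - u^3/1800"
  using u_le u_pos u2_nonneg u3_le by linarith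

lemma C1_neg: "-1/20 + 23429/270000 * u - 17839/405000 * u^2 + 6041/810000 * u^3 - u^4/5400 \<le> 0"
  using u_le u_pos u2_nonneg u3_le u4_nonneg by linarith

lemma phi_le1: "phi \<le> 1"
proof -
  have "(phi - 1) * gL \<le> 0" using hphi u_le by simp
  then show ?thesis using gL_pos by (simp add: mult_le_0_iff)
qed

lemma kap_nonneg: "0 \<le> kap" using u_le gL_pos by (simp add: kap_def)

lemma kap_le_phi: "kap \<le> phi"
proof -
  have "gL - 203 * (1 - u) / 300 \<ge> 97/300" using u_pos unfolding gL_eq by (simp add: field_simps)
  have "phi * gL^2 = gL * (phi * gL)" by (simp add: power2_eq_square algebra_simps)
  also have "\<dots> = gL * (gL - 203 * (1 - u) / 300)" by (simp only: hphi2)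
  finally have "phi * gL^2 = gL * (gL - 203 * (1 - u) / 300)" .
  moreover have "gL * (gL - 203 * (1 - u) / 300) \<ge> (497/600) * (97/300)"
    using gL_ge \<open>gL - 203 * (1 - u) / 300 \<ge> 97/300\<close>
    by (intro mult_mono) auto
  moreover have "kap * gL^2 \<le> 2/9" using hkap u_pos by simp
  ultimately have "kap * gL^2 \<le> phi * gL^2" by linarith
  then show ?thesis using gL_pos by simp
qed

lemma phi_nonneg: "0 \<le> phi" using kap_nonneg kap_le_phi by linarith

definition Fc :: "nat \<Rightarrow> nat \<Rightarrow> real" where
  "Fc c d = (if 2 \<le> c then 1 else if c = 1 \<and> d = 1 then 1 else if c = 1 \<and> d = 0 then phi
             else if c = 0 \<and> d = 0 then kap else 0)"

lemma Fc_range: "0 \<le> Fc c d \<and> Fc c d \<le> 1"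
  using phi_le1 phi_nonneg kap_nonneg kap_le_phi by (auto simp: Fc_def)

lemma Fc_diff_neg: "Fc c d - Fc c (Suc d) = (phi - 1) * Xf c d + Yf c d + kap * Zf c d"
  by (auto simp: Fc_def Xf_def Yf_def Zf_def)

lemma Fc_diff_pos: "0 \<le> Fc (Suc c) d - Fc c d"
  using phi_le1 phi_nonneg kap_nonneg kap_le_phi by (auto simp: Fc_def)

lemma CE_lin3: "CE I (\<lambda>c d. a * F c d + b * H c d + e * K c d) = a * CE I F + b * CE I H + e * CE I K"
proof -
  have "CE I (\<lambda>c d. a * F c d + b * H c d + e * K c d) = CE I (\<lambda>c d. a * F c d + b * H c d) + CE I (\<lambda>c d. e * K c d)"
    by (rule CE_add)
  also have "CE I (\<lambda>c d. a * F c d + b * H c d) = CE I (\<lambda>c d. a * F c d) + CE I (\<lambda>c d. b * H c d)"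
    by (rule CE_add)
  finally show ?thesis by (simp add: CE_cmult)
qed

lemma CE_lin2: "CE I (\<lambda>c d. a * F c d + b * H c d) = a * CE I F + b * CE I H"
  by (simp add: CE_add CE_cmult)

lemma CE_lin3': "CE I (\<lambda>c d. a * F c d + H c d + e * K c d) = a * CE I F + CE I H + e * CE I K"
  using CE_lin3[of I a F 1 H e K] by simp

lemma CE_lin2': "CE I (\<lambda>c d. a * F c d + H c d) = a * CE I F + CE I H"
  using CE_lin2[of I a F 1 H] by simp

lemma CE_ext: "(\<And>c d. F c d = H c d) \<Longrightarrow> CE I F = CE I H"
  by (metis ext)

lemma wt0: "wt 0 A = aH" "wt 0 (-1) = bH" "wt 0 (-2) = cH"
  by (simp_all add: wt_A wt_m1 wt_m2)

lemma card_J0_real: "real (card J0) = real n - 1" "real (card J0) - 1 = real n - 2"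
  using J0_props(3) n3 by (auto simp: of_nat_diff)

lemma D0_zero: "CE J0 (\<lambda>c d. (phi - 1) * Xf c d + Yf c d + kap * Zf c d) = 0"
proof -
  obtain Z X Y where hZ: "CE J0 Zf = Z" and hX: "CE J0 Xf = X" and hY: "CE J0 Yf = Y" by blast
  note h = hom_g[OF J0_props(1,2)]
  let ?P = "gL ^ card J0"
  have z: "Z = ?P" using h hZ by simp
  have x: "gL * X = (real n - 1) * pL * ?P" using h hX card_J0_real by simp
  have y: "gL^2 * Y = (real n - 1) * (real n - 2) * pL * rL * ?P" using h hY card_J0_real by simp
  have "gL^2 * ((phi - 1) * X + Y + kap * Z) = (phi - 1) * gL * (gL * X) + gL^2 * Y + kap * gL^2 * Z"
    by (simp add: algebra_simps power2_eq_square)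
  also have "\<dots> = ?P * ((phi - 1) * (real n - 1) * pL * gL + (real n - 1) * (real n - 2) * pL * rL + kap * gL^2)"
    unfolding x y z by (simp add: algebra_simps)
  also have "\<dots> = 0" by (simp add: BH_bracket)
  finally have "(phi - 1) * X + Y + kap * Z = 0" using gL_pos by simp
  then show ?thesis using hZ hX hY by (simp add: CE_lin3')
qed

lemma card_Jx_real: assumes "0 < i" "i < n"
  shows "real (card (Jx i)) = real n - 2" "real (card (Jx i)) - 1 = real n - 3"
  using Jx_props(3)[OF assms] n3 by (auto simp: of_nat_diff)

lemma Di_zero:
  assumes i: "0 < i" "i < n"
  shows "CE (insert 0 (Jx i)) (\<lambda>c d. (phi - 1) * Xf c d + Yf c d + kap * Zf c d) = 0"
proof -
  note J = Jx_props[OF i]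
  let ?J = "Jx i"
  obtain Z X Q Y where hZ: "CE ?J Zf = Z" and hX: "CE ?J Xf = X" and hQ: "CE ?J Qf = Q" and hY: "CE ?J Yf = Y" by blast
  note h = hom_g[OF J(1,2)]
  let ?P = "gL ^ card ?J"
  have z: "Z = ?P" using h hZ by simp
  have x: "gL * X = (real n - 2) * pL * ?P" using h hX card_Jx_real[OF i] by simp
  have q: "gL * Q = (real n - 2) * rL * ?P" using h hQ card_Jx_real[OF i] by simp
  have y: "gL^2 * Y = (real n - 2) * (real n - 3) * pL * rL * ?P" using h hY card_Jx_real[OF i] by simp
  have peel: "CE (insert 0 ?J) (\<lambda>c d. (phi - 1) * Xf c d + Yf c d + kap * Zf c d)
     = aH * ((phi - 1) * Z + Q) + bH * X + cH * ((phi - 1) * X + Y + kap * Z)"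
  proof -
    have "CE (insert 0 ?J) (\<lambda>c d. (phi - 1) * Xf c d + Yf c d + kap * Zf c d)
      = aH * CE ?J (\<lambda>c d. (phi - 1) * Zf c d + Qf c d)
        + bH * CE ?J Xf
        + cH * CE ?J (\<lambda>c d. (phi - 1) * Xf c d + Yf c d + kap * Zf c d)"
      using CE_peel[OF J(1,2)] wt0 by simp
    also have "\<dots> = aH * ((phi - 1) * Z + Q) + bH * X + cH * ((phi - 1) * X + Y + kap * Z)"
      using hZ hX hQ hY by (simp add: CE_lin3' CE_lin2')
    finally show ?thesis .
  qed
  have "gL^2 * (aH * ((phi - 1) * Z + Q) + bH * X + cH * ((phi - 1) * X + Y + kap * Z))
     = aH * ((phi - 1) * gL^2 * Z + gL * (gL * Q)) + bH * gL * (gL * X)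
       + cH * ((phi - 1) * gL * (gL * X) + gL^2 * Y + kap * gL^2 * Z)"
    by (simp add: algebra_simps power2_eq_square)
  also have "\<dots> = ?P * (aH * ((phi - 1) * gL^2 + (real n - 2) * rL * gL) + bH * (real n - 2) * pL * gL
     + cH * ((phi - 1) * (real n - 2) * pL * gL + (real n - 2) * (real n - 3) * pL * rL + kap * gL^2))"
    unfolding x y z q by (simp add: algebra_simps)
  also have "\<dots> = 0" by (simp add: BL_bracket)
  finally show ?thesis using peel gL_pos by simp
qed

end

context cex begin

definition Phc :: "nat \<Rightarrow> nat \<Rightarrow> real" where
  "Phc c d = (if c = 1 \<and> d = 1 then 1/2 else if c = 1 \<and> d = 0 then - phi / 2
              else if c = 0 \<and> d = 0 then - 2 * real n * kap else 0)"

definition Psc :: "nat \<Rightarrow> nat \<Rightarrow> real" where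
  "Psc c d = (if c = 1 then real d - 1/2 else 0)"

lemma gain_pos: "0 < CE {..<n} Phc"
proof -
  obtain Z X Q Y where hZ: "CE J0 Zf = Z" and hX: "CE J0 Xf = X" and hQ: "CE J0 Qf = Q" and hY: "CE J0 Yf = Y" by blast
  note h = hom_g[OF J0_props(1,2)]
  let ?P = "gL ^ card J0"
  have z: "Z = ?P" using h hZ by simp
  have x: "gL * X = (real n - 1) * pL * ?P" using h hX card_J0_real by simp
  have q: "gL * Q = (real n - 1) * rL * ?P" using h hQ card_J0_real by simp
  have y: "gL^2 * Y = (real n - 1) * (real n - 2) * pL * rL * ?P" using h hY card_J0_real by simp
  have a: "CE J0 (\<lambda>c d. Phc (Suc c) d) = (1/2) * Q + (- phi/2) * Z"
  proof -
    have "CE J0 (\<lambda>c d. Phc (Suc c) d) = CE J0 (\<lambda>c d. (1/2) * Qf c d + (- phi/2) * Zf c d)"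
      by (rule CE_ext) (auto simp: Phc_def Qf_def Zf_def)
    then show ?thesis using hQ hZ by (simp only: CE_lin2)
  qed
  have b: "CE J0 (\<lambda>c d. Phc c (Suc d)) = (1/2) * X"
  proof -
    have "CE J0 (\<lambda>c d. Phc c (Suc d)) = CE J0 (\<lambda>c d. (1/2) * Xf c d)"
      by (rule CE_ext) (auto simp: Phc_def Xf_def)
    then show ?thesis using hX by (simp only: CE_cmult)
  qed
  have c: "CE J0 Phc = (1/2) * Y + (- phi/2) * X + (- 2 * real n * kap) * Z"
  proof -
    have "CE J0 Phc = CE J0 (\<lambda>c d. (1/2) * Yf c d + (- phi/2) * Xf c d + (- 2 * real n * kap) * Zf c d)"
      by (rule CE_ext) (auto simp: Phc_def Yf_def Xf_def Zf_def)
    then show ?thesis using hY hX hZ by (simp only: CE_lin3)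
  qed
  have peel: "CE {..<n} Phc = aH * ((1/2) * Q + (- phi/2) * Z) + bH * ((1/2) * X) + cH * ((1/2) * Y + (- phi/2) * X + (- 2 * real n * kap) * Z)"
    unfolding J0_props(4) using CE_peel[OF J0_props(1,2), of Phc] wt0 a b c by simp
  have "gL^2 * CE {..<n} Phc = aH * ((1/2) * gL * (gL * Q) - (phi/2) * gL^2 * Z) + bH * (1/2) * gL * (gL * X)
      + cH * ((1/2) * (gL^2 * Y) - (phi/2) * gL * (gL * X) - 2 * real n * kap * gL^2 * Z)"
    unfolding peel by (simp add: algebra_simps power2_eq_square)
  also have "\<dots> = ?P * (aH * ((real n - 1) * rL * gL / 2 - phi * gL^2 / 2) + bH * (real n - 1) * pL * gL / 2
   + cH * ((real n - 1) * (real n - 2) * pL * rL / 2 - phi * (real n - 1) * pL * gL / 2 - 2 * real n * kap * gL^2))"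
    unfolding x y z q by (simp add: field_simps)
  also have "\<dots> = ?P * (49/900 - 20759/270000 * u + 6209/270000 * u^2 - u^3/1800)"
    by (simp only: GAIN_poly)
  finally have "gL^2 * CE {..<n} Phc = ?P * (49/900 - 20759/270000 * u + 6209/270000 * u^2 - u^3/1800)" .
  moreover have "0 < ?P * (49/900 - 20759/270000 * u + 6209/270000 * u^2 - u^3/1800)"
    using GAIN_pos gL_pos by simp
  ultimately have "0 < gL^2 * CE {..<n} Phc" by simp
  then show ?thesis using gL_pos by (simp add: zero_less_mult_iff)
qed

lemma c1_nonpos: "CE {..<n} Psc \<le> 0"
proof -
  obtain E0' E0d' E1' E1d' where h0: "CE J0 E0 = E0'" and h0d: "CE J0 E0d = E0d'" and h1: "CE J0 E1 = E1'"
    and h1d: "CE J0 E1d = E1d'" by blast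
  note h = hom_q[OF J0_props(1,2)]
  let ?P = "qL ^ card J0"
  have e0: "E0' = ?P" using h h0 by simp
  have e0d: "qL * E0d' = (real n - 1) * rL * ?P" using h h0d card_J0_real by simp
  have e1: "qL * E1' = (real n - 1) * pL * ?P" using h h1 card_J0_real by simp
  have e1d: "qL^2 * E1d' = (real n - 1) * (real n - 2) * pL * rL * ?P" using h h1d card_J0_real by simp
  have a: "CE J0 (\<lambda>c d. Psc (Suc c) d) = 1 * E0d' + (- 1/2) * E0'"
  proof -
    have "CE J0 (\<lambda>c d. Psc (Suc c) d) = CE J0 (\<lambda>c d. 1 * E0d c d + (- 1/2) * E0 c d)"
      by (rule CE_ext) (auto simp: Psc_def E0d_def E0_def)
    then show ?thesis using h0d h0 by (simp only: CE_lin2)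
  qed
  have b: "CE J0 (\<lambda>c d. Psc c (Suc d)) = 1 * E1d' + (1/2) * E1'"
  proof -
    have "CE J0 (\<lambda>c d. Psc c (Suc d)) = CE J0 (\<lambda>c d. 1 * E1d c d + (1/2) * E1 c d)"
      by (rule CE_ext) (auto simp: Psc_def E1d_def E1_def)
    then show ?thesis using h1d h1 by (simp only: CE_lin2)
  qed
  have c: "CE J0 Psc = 1 * E1d' + (- 1/2) * E1'"
  proof -
    have "CE J0 Psc = CE J0 (\<lambda>c d. 1 * E1d c d + (- 1/2) * E1 c d)"
      by (rule CE_ext) (auto simp: Psc_def E1d_def E1_def)
    then show ?thesis using h1d h1 by (simp only: CE_lin2)
  qed
  have peel: "CE {..<n} Psc = aH * (1 * E0d' + (- 1/2) * E0') + bH * (1 * E1d' + (1/2) * E1') + cH * (1 * E1d' + (- 1/2) * E1')"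
    unfolding J0_props(4) using CE_peel[OF J0_props(1,2), of Psc] wt0 a b c by simp
  have "qL^2 * CE {..<n} Psc = aH * (qL * (qL * E0d') - qL^2 * E0' / 2) + bH * (qL^2 * E1d' + qL * (qL * E1') / 2)
      + cH * (qL^2 * E1d' - qL * (qL * E1') / 2)"
    unfolding peel by (simp add: algebra_simps power2_eq_square)
  also have "\<dots> = ?P * (aH * (real n - 1) * rL * qL + bH * ((real n - 1) * (real n - 2) * pL * rL + (real n - 1) * pL * qL)
   + cH * (real n - 1) * (real n - 2) * pL * rL - (1/2) * (aH * qL^2 + (bH + cH) * (real n - 1) * pL * qL))"
    unfolding e0 e0d e1 e1d by (simp add: field_simps power2_eq_square)
  finally have eq: "qL^2 * CE {..<n} Psc = ?P * (aH * (real n - 1) * rL * qL + bH * ((real n - 1) * (real n - 2) * pL * rL + (real n - 1) * pL * qL)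
   + cH * (real n - 1) * (real n - 2) * pL * rL - (1/2) * (aH * qL^2 + (bH + cH) * (real n - 1) * pL * qL))" .
  have "gL * (aH * (real n - 1) * rL * qL + bH * ((real n - 1) * (real n - 2) * pL * rL + (real n - 1) * pL * qL)
   + cH * (real n - 1) * (real n - 2) * pL * rL - (1/2) * (aH * qL^2 + (bH + cH) * (real n - 1) * pL * qL)) \<le> 0"
    using C1_poly C1_neg by simp
  then have br: "aH * (real n - 1) * rL * qL + bH * ((real n - 1) * (real n - 2) * pL * rL + (real n - 1) * pL * qL)
   + cH * (real n - 1) * (real n - 2) * pL * rL - (1/2) * (aH * qL^2 + (bH + cH) * (real n - 1) * pL * qL) \<le> 0"
    using gL_pos by (simp add: mult_le_0_iff)
  have "qL^2 * CE {..<n} Psc \<le> 0" unfolding eq using br qL_pos by (simp add: mult_le_0_iff)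
  then show ?thesis using qL_pos by (simp add: mult_le_0_iff)
qed

end

context cex begin

definition fS :: "(nat \<Rightarrow> real) \<Rightarrow> real" where
  "fS v = Fc (cnt {..<n} (\<lambda>y. 0 < y) v) (cnt {..<n} (\<lambda>y. y = -1) v)"

lemma cnt_real: "finite I \<Longrightarrow> real (cnt I P v) = (\<Sum>i\<in>I. if P (v i) then 1 else 0)"
proof -
  assume "finite I"
  have "{j\<in>I. P (v j)} = I \<inter> {i. P (v i)}" by auto
  then show ?thesis unfolding cnt_def using \<open>finite I\<close> by (simp add: sum.If_cases)
qed

definition Fr :: "real \<Rightarrow> real \<Rightarrow> real" where
  "Fr x y = (if 2 \<le> x then 1 else if x = 1 \<and> y = 1 then 1 else if x = 1 \<and> y = 0 then phi
             else if x = 0 \<and> y = 0 then kap else 0)"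

lemma Fc_Fr: "Fc c d = Fr (real c) (real d)"
  unfolding Fc_def Fr_def by simp

lemma fS_alt: "fS v = Fr (\<Sum>i\<in>{..<n}. if 0 < v i then 1 else 0) (\<Sum>i\<in>{..<n}. if v i = -1 then 1 else 0)"
  unfolding fS_def Fc_Fr by (simp only: cnt_real[OF finite_lessThan])

lemma fS_meas: "fS \<in> borel_measurable (PiM {..<n} (\<lambda>_. borel))"
  unfolding fS_alt[abs_def] Fr_def by measurable


lemma upd_meas:
  assumes i: "i < n"
  shows "(\<lambda>w. w(i := x)) \<in> measurable (PiM ({..<n} - {i}) (\<lambda>_. borel)) (PiM {..<n} (\<lambda>_. (borel :: real measure)))"
proof -
  have "(\<lambda>w j. (w(i := x)) j) \<in> measurable (PiM ({..<n} - {i}) (\<lambda>_. borel)) (PiM {..<n} (\<lambda>_. (borel :: real measure)))"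
  proof (rule measurable_PiM_single')
    fix j assume j: "j \<in> {..<n}"
    show "(\<lambda>w. (w(i := x)) j) \<in> borel_measurable (PiM ({..<n} - {i}) (\<lambda>_. borel))"
    proof (cases "j = i")
      case True then show ?thesis by simp
    next
      case False
      then have "j \<in> {..<n} - {i}" using j by simp
      then have "(\<lambda>w. w j) \<in> borel_measurable (PiM ({..<n} - {i}) (\<lambda>_. borel))"
        by (rule measurable_component_singleton)
      then show ?thesis using False by simp
    qed
  next
    show "(\<lambda>w j. (w(i := x)) j) \<in> space (PiM ({..<n} - {i}) (\<lambda>_. borel)) \<rightarrow> (\<Pi>\<^sub>E j\<in>{..<n}. space (borel :: real measure))"
      using i by (auto simp: space_PiM PiE_iff extensional_def)
  qed
  then show ?thesis by (simp add: fun_upd_def)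
qed

lemma comp_upd_meas:
  fixes F :: "(nat \<Rightarrow> real) \<Rightarrow> real"
  assumes i: "i < n" and F: "F \<in> borel_measurable (PiM {..<n} (\<lambda>_. borel))"
  shows "(\<lambda>w. F (w(i := x))) \<in> borel_measurable (PiM ({..<n} - {i}) (\<lambda>_. borel))"
  using measurable_comp[OF upd_meas[OF i] F] by (simp add: comp_def)

lemma interim_fS:
  assumes i: "i < n"
  shows "interim n G fS i x = CE ({..<n} - {i}) (\<lambda>c d. Fc ((if 0 < x then 1 else 0) + c) ((if x = -1 then 1 else 0) + d))"
proof -
  let ?I = "{..<n} - {i}"
  have ins: "{..<n} = insert i ?I" using i by auto
  have fin: "finite ?I" by simp
  have ni: "i \<notin> ?I" by simp
  have "interim n G fS i x = Ex ?I (\<lambda>w. fS (w(i := x)))"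
    unfolding interim_def by (rule int_formula[OF fin comp_upd_meas[OF i fS_meas]])
  also have "\<dots> = CE ?I (\<lambda>c d. Fc ((if 0 < x then 1 else 0) + c) ((if x = -1 then 1 else 0) + d))"
  proof -
    have c: "cnt {..<n} P (w(i := x)) = (if P x then 1 else 0) + cnt ?I P w" for P w
      using cnt_upd[OF fin ni, of P w x] ins by simp
    show ?thesis unfolding CE_def fS_def by (rule Ex_cong) (simp only: c)
  qed
  finally show ?thesis .
qed

lemma interim_vals:
  assumes i: "i < n"
  shows "interim n G fS i A = CE ({..<n} - {i}) (\<lambda>c d. Fc (Suc c) d)"
    "interim n G fS i (-1) = CE ({..<n} - {i}) (\<lambda>c d. Fc c (Suc d))"
    "interim n G fS i (-2) = CE ({..<n} - {i}) Fc"
  using interim_fS[OF i] A_neq by simp_all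

lemma interim_eq:
  assumes i: "i < n"
  shows "interim n G fS i (-2) = interim n G fS i (-1)"
proof -
  let ?I = "{..<n} - {i}"
  have "interim n G fS i (-2) - interim n G fS i (-1) = CE ?I (\<lambda>c d. Fc c d - Fc c (Suc d))"
    unfolding interim_vals[OF i] by (simp only: CE_diff)
  also have "\<dots> = CE ?I (\<lambda>c d. (phi - 1) * Xf c d + Yf c d + kap * Zf c d)"
    by (rule CE_ext) (simp add: Fc_diff_neg)
  also have "\<dots> = 0"
  proof (cases "i = 0")
    case True
    then have "?I = J0" by (simp add: J0_def)
    then show ?thesis using D0_zero by simp
  next
    case False
    then have "?I = insert 0 (Jx i)" using Jx_props(4)[of i] i by simp
    then show ?thesis using Di_zero[of i] False i by simp
  qed
  finally show ?thesis by simp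
qed

lemma interim_mono:
  assumes i: "i < n"
  shows "interim n G fS i (-2) \<le> interim n G fS i A"
proof -
  let ?I = "{..<n} - {i}"
  have "0 \<le> CE ?I (\<lambda>c d. Fc (Suc c) d - Fc c d)"
    using CE_mono[of "\<lambda>c d. 0" "\<lambda>c d. Fc (Suc c) d - Fc c d" ?I] Fc_diff_pos by simp
  also have "\<dots> = interim n G fS i A - interim n G fS i (-2)"
    unfolding interim_vals[OF i] by (simp only: CE_diff)
  finally show ?thesis by simp
qed

lemma BIC_fS: "BIC n G V fS"
  unfolding BIC_def
proof (intro allI impI ballI)
  fix i x x' assume i: "i < n" and x: "x \<in> V" and x': "x' \<in> V"
  have e: "interim n G fS i (-2) = interim n G fS i (-1)" by (rule interim_eq[OF i])
  have m: "interim n G fS i (-2) \<le> interim n G fS i A" by (rule interim_mono[OF i])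
  show "x * interim n G fS i x' \<le> x * interim n G fS i x"
    using x x' e m A_neq by (auto simp: V_def intro: mult_left_mono)
qed

end

context cex begin

lemma SCF_fS: "SCF n V fS"
  unfolding SCF_def using fS_meas Fc_range by (simp add: fS_def)

lemma cnt_perm:
  assumes p: "p permutes {..<n}"
  shows "cnt {..<n} P (v \<circ> p) = cnt {..<n} P v"
proof -
  have inj: "inj p" by (rule permutes_inj[OF p])
  have img: "p ` {j\<in>{..<n}. P (v (p j))} = {k\<in>{..<n}. P (v k)}"
  proof
    show "p ` {j\<in>{..<n}. P (v (p j))} \<subseteq> {k\<in>{..<n}. P (v k)}"
      using permutes_in_image[OF p] by auto
  next
    show "{k\<in>{..<n}. P (v k)} \<subseteq> p ` {j\<in>{..<n}. P (v (p j))}"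
    proof
      fix k assume k: "k \<in> {k\<in>{..<n}. P (v k)}"
      then have "k \<in> p ` {..<n}" using permutes_image[OF p] by simp
      then obtain j where j: "j \<in> {..<n}" "k = p j" by auto
      then show "k \<in> p ` {j\<in>{..<n}. P (v (p j))}" using k by auto
    qed
  qed
  have "cnt {..<n} P (v \<circ> p) = card (p ` {j\<in>{..<n}. P (v (p j))})"
    unfolding cnt_def using inj by (simp add: card_image inj_on_subset[OF inj])
  also have "\<dots> = cnt {..<n} P v" unfolding img cnt_def ..
  finally show ?thesis .
qed

lemma anon_fS: "anonymous n V fS"
  unfolding anonymous_def fS_def by (simp add: cnt_perm)

lemma welfare_eq:
  assumes F: "F \<in> borel_measurable (PiM {..<n} (\<lambda>_. borel))"
  shows "welfare n G F = Ex {..<n} (\<lambda>v. F v * (\<Sum>i<n. v i))"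
proof -
  have "(\<lambda>v. F v * (\<Sum>i<n. v i)) \<in> borel_measurable (PiM {..<n} (\<lambda>_. borel))"
    using F by measurable
  then show ?thesis unfolding welfare_def by (rule int_formula[OF finite_lessThan])
qed

lemma S_counts:
  assumes t: "t \<in> PiE {..<n} (\<lambda>_. V)"
  shows "(\<Sum>i<n. t i) = (A + 2) * real (cnt {..<n} (\<lambda>y. 0 < y) t) + real (cnt {..<n} (\<lambda>y. y = -1) t) - 2 * real n"
proof -
  have pt: "t i = (A + 2) * (if 0 < t i then 1 else 0) + (if t i = -1 then 1 else 0) - 2" if "i < n" for i
  proof -
    have "t i \<in> V" using t that by (auto simp: PiE_iff)
    then show ?thesis using A_neq by (auto simp: V_def)
  qed
  have "(\<Sum>i<n. t i) = (\<Sum>i<n. (A + 2) * (if 0 < t i then 1 else 0) + (if t i = -1 then 1 else 0) - 2)"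
    using pt by (intro sum.cong) auto
  also have "\<dots> = (A + 2) * (\<Sum>i<n. if 0 < t i then 1 else 0) + (\<Sum>i<n. if t i = -1 then 1 else 0) - 2 * real n"
    by (simp add: sum.distrib sum_subtractf sum_distrib_left)
  also have "\<dots> = (A + 2) * real (cnt {..<n} (\<lambda>y. 0 < y) t) + real (cnt {..<n} (\<lambda>y. y = -1) t) - 2 * real n"
    by (simp add: cnt_real)
  finally show ?thesis .
qed

definition t1 :: "nat \<Rightarrow> real" where "t1 = (\<lambda>i. if i < n then (if i = 0 then A else -2) else undefined)"

lemma t1_in: "t1 \<in> PiE {..<n} (\<lambda>_. V)"
  by (auto simp: t1_def PiE_iff V_def extensional_def)

lemma chi_t1: "chi n t1 = {0}"
  using n3 A_neq by (auto simp: chi_def t1_def)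

lemma ord_const:
  assumes ord: "ordinal n V g" and an: "anonymous n V g"
    and t: "t \<in> PiE {..<n} (\<lambda>_. V)" and c: "cnt {..<n} (\<lambda>y. 0 < y) t = 1"
  shows "g t = g t1"
proof -
  from c obtain m0 where m0: "{j\<in>{..<n}. 0 < t j} = {m0}" unfolding cnt_def by (auto simp: card_1_singleton_iff)
  then have m0n: "m0 < n" and tm0: "0 < t m0" by auto
  have others: "j < n \<Longrightarrow> j \<noteq> m0 \<Longrightarrow> \<not> 0 < t j" for j using m0 by auto
  let ?p = "Transposition.transpose 0 m0"
  have p: "?p permutes {..<n}" using m0n n3 by (intro permutes_swap_id) auto
  have tp: "t \<circ> ?p \<in> PiE {..<n} (\<lambda>_. V)"
    using t m0n permutes_in_image[OF p] by (auto simp: PiE_iff extensional_def Transposition.transpose_def)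
  have chi_tp: "chi n (t \<circ> ?p) = {0}"
  proof -
    have "(0 < t (?p j)) \<longleftrightarrow> j = 0" if "j < n" for j
    proof (cases "j = 0")
      case True then show ?thesis using tm0 by simp
    next
      case False
      show ?thesis
      proof (cases "j = m0")
        case True then show ?thesis using False others[of 0] n3 by simp
      next
        case False2: False
        then show ?thesis using False others[of j] that by simp
      qed
    qed
    then show ?thesis using n3 tm0 by (auto simp: chi_def)
  qed
  have "g t = g (t \<circ> ?p)" using an t p unfolding anonymous_def by blast
  also have "\<dots> = g t1" using ord tp t1_in chi_tp chi_t1 unfolding ordinal_def by metis
  finally show ?thesis .
qed

end

context cex begin

lemma cnt_le: "cnt {..<n} P t \<le> n"
proof -
  have "cnt {..<n} P t \<le> card {..<n}" unfolding cnt_def by (rule card_mono) auto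
  then show ?thesis by simp
qed

lemma pointwise:
  assumes t: "t \<in> PiE {..<n} (\<lambda>_. V)" and g0: "0 \<le> g t" and g1: "g t \<le> 1"
    and gc: "cnt {..<n} (\<lambda>y. 0 < y) t = 1 \<Longrightarrow> g t = h1"
  shows "Phc (cnt {..<n} (\<lambda>y. 0 < y) t) (cnt {..<n} (\<lambda>y. y = -1) t) - h1 * Psc (cnt {..<n} (\<lambda>y. 0 < y) t) (cnt {..<n} (\<lambda>y. y = -1) t)
         \<le> (fS t - g t) * (\<Sum>i<n. t i)"
proof -
  define c where "c = cnt {..<n} (\<lambda>y. 0 < y) t"
  define d where "d = cnt {..<n} (\<lambda>y. y = -1) t"
  have S: "(\<Sum>i<n. t i) = (2 * real n - 1/2) * real c + real d - 2 * real n"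
    using S_counts[OF t] unfolding c_def d_def A_def by simp
  have dn: "real d \<le> real n" using cnt_le unfolding d_def by simp
  have f: "fS t = Fc c d" unfolding fS_def c_def d_def ..
  have key: "Phc c d - h1 * Psc c d \<le> (Fc c d - g t) * ((2 * real n - 1/2) * real c + real d - 2 * real n)"
  proof (cases "2 \<le> c")
    case True
    have "(2 * real n - 1/2) * real c \<ge> (2 * real n - 1/2) * 2"
      using True n3 by (intro mult_left_mono) auto
    then have "0 \<le> (2 * real n - 1/2) * real c + real d - 2 * real n" using n3 by simp
    moreover have "0 \<le> Fc c d - g t" using True g1 by (simp add: Fc_def)
    ultimately have "0 \<le> (Fc c d - g t) * ((2 * real n - 1/2) * real c + real d - 2 * real n)" by simp
    moreover have "Phc c d = 0" "Psc c d = 0" using True by (auto simp: Phc_def Psc_def)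
    ultimately show ?thesis by simp
  next
    case False
    then have "c = 0 \<or> c = 1" by auto
    then show ?thesis
    proof
      assume c1: "c = 1"
      then have gt: "g t = h1" using gc c_def by simp
      have "Fc 1 d * (real d - 1/2) = Phc 1 d"
        by (cases "d = 0"; cases "d = 1") (auto simp: Fc_def Phc_def)
      then show ?thesis using c1 gt by (simp add: Psc_def algebra_simps)
    next
      assume c0: "c = 0"
      have Sneg: "real d - 2 * real n \<le> 0" using dn by simp
      have "Fc 0 d * (real d - 2 * real n) = Phc 0 d"
        by (cases "d = 0") (auto simp: Fc_def Phc_def)
      moreover have "0 \<le> - g t * (real d - 2 * real n)" using g0 Sneg by (simp add: mult_nonneg_nonpos)
      ultimately show ?thesis using c0 by (simp add: Psc_def algebra_simps)
    qed
  qed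
  show ?thesis unfolding f S using key unfolding c_def d_def .
qed

lemma welfare_gt:
  assumes scf: "SCF n V g" and ord: "ordinal n V g" and an: "anonymous n V g"
  shows "welfare n G g < welfare n G fS"
proof -
  have gm: "g \<in> borel_measurable (PiM {..<n} (\<lambda>_. borel))" using scf by (simp add: SCF_def)
  have grange: "\<And>v. v \<in> PiE {..<n} (\<lambda>_. V) \<Longrightarrow> 0 \<le> g v \<and> g v \<le> 1" using scf by (simp add: SCF_def)
  define h1 where "h1 = g t1"
  have h1: "0 \<le> h1" using grange[OF t1_in] by (simp add: h1_def)
  have "welfare n G fS - welfare n G g = Ex {..<n} (\<lambda>t. (fS t - g t) * (\<Sum>i<n. t i))"
    unfolding welfare_eq[OF fS_meas] welfare_eq[OF gm] Ex_diff[symmetric]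
    by (rule Ex_cong) (simp add: algebra_simps)
  also have "\<dots> \<ge> Ex {..<n} (\<lambda>t. Phc (cnt {..<n} (\<lambda>y. 0 < y) t) (cnt {..<n} (\<lambda>y. y = -1) t)
                   - h1 * Psc (cnt {..<n} (\<lambda>y. 0 < y) t) (cnt {..<n} (\<lambda>y. y = -1) t))"
  proof (rule Ex_mono)
    fix t assume t: "t \<in> PiE {..<n} (\<lambda>_. V)"
    show "Phc (cnt {..<n} (\<lambda>y. 0 < y) t) (cnt {..<n} (\<lambda>y. y = -1) t)
                   - h1 * Psc (cnt {..<n} (\<lambda>y. 0 < y) t) (cnt {..<n} (\<lambda>y. y = -1) t) \<le> (fS t - g t) * (\<Sum>i<n. t i)"
      using pointwise[OF t, of g h1] grange[OF t] ord_const[OF ord an t] by (simp add: h1_def)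
  qed
  also have "Ex {..<n} (\<lambda>t. Phc (cnt {..<n} (\<lambda>y. 0 < y) t) (cnt {..<n} (\<lambda>y. y = -1) t)
                   - h1 * Psc (cnt {..<n} (\<lambda>y. 0 < y) t) (cnt {..<n} (\<lambda>y. y = -1) t))
           = CE {..<n} Phc - h1 * CE {..<n} Psc"
    unfolding CE_def by (simp add: Ex_diff Ex_cmult)
  finally have "CE {..<n} Phc - h1 * CE {..<n} Psc \<le> welfare n G fS - welfare n G g" .
  moreover have "0 \<le> - h1 * CE {..<n} Psc" using h1 c1_nonpos by (simp add: mult_nonneg_nonpos)
  ultimately show ?thesis using gain_pos by linarith
qed

lemma standing: "standing_assms n G V"
  unfolding standing_assms_def
proof (intro conjI allI impI)
  fix i assume "i < n"
  show "prob_space (G i)" by (rule prob_G)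
  show "sets (G i) = sets borel" by simp
  show "support_of (G i) = V" by (rule support_G)
  show "integrable (G i) (\<lambda>x. x)" by (rule integrable_G)
  have s: "1 - measure (G i) {..0} = wt i A" using wt_sum[of i] by (simp add: measure_G_nonpos)
  show "0 < 1 - measure (G i) {..0}" unfolding s using wt_pos[of A i] by (simp add: V_def)
  show "1 - measure (G i) {..0} < 1" unfolding s using wt_sum[of i] wt_pos[of "-1" i] wt_pos[of "-2" i] by (simp add: V_def)
next
  show "0 \<notin> V" using A_neq by (auto simp: V_def)
qed

end

theorem theorem2:
  fixes n :: nat
  assumes "n \<ge> 3"
  shows "\<exists>G V. standing_assms n G V \<and>
           (\<exists>f. SCF n V f \<and> anonymous n V f \<and> BIC n G V f \<and>
                (\<forall>g. SCF n V g \<and> ordinal n V g \<and> anonymous n V g \<and> BIC n G V g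
                     \<longrightarrow> welfare n G f > welfare n G g))"
proof -
  interpret cex n using assms by unfold_locales
  show ?thesis
  proof (intro exI conjI allI impI)
    show "standing_assms n G V" by (rule standing)
    show "SCF n V fS" by (rule SCF_fS)
    show "anonymous n V fS" by (rule anon_fS)
    show "BIC n G V fS" by (rule BIC_fS)
    fix g assume "SCF n V g \<and> ordinal n V g \<and> anonymous n V g \<and> BIC n G V g"
    then show "welfare n G fS > welfare n G g" using welfare_gt by blast
  qed
qed

end
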